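(* If $\Phi$ is the irreducible non-reduced root system of type $\mathsf{BC}_\ell$, then there is no low triple $(\lambda,\mu,\nu)$ of dominant weights of $\Phi$.
   Context: $\Phi$ of type $\mathsf{BC}_\ell$ is the union of a root system of type $\mathsf B_\ell$ (square lengths $1,2$) and one of type $\mathsf C_\ell$ (square lengths $2,4$), with basis $\Delta=\{\alpha_1,\dots,\alpha_\ell\}$ the basis of $\mathsf B_\ell$ in Bourbaki numbering, $\alpha_\ell$ being the unique simple root with $2\alpha_\ell\in\Phi$. Integral weights are those $\lambda$ with $\langle\lambda,\alpha^\vee\rangle\in\mathbb Z$ for all $\alpha\in\Phi$; the fundamental weights $\omega_1,\dots,\omega_\ell$ are dual to $\alpha_1^\vee,\dots,\alpha_{\ell-1}^\vee,(2\alpha_\ell)^\vee$ (those of $\mathsf C_\ell$); dominant weights are $\mathbb N$-combinations of them. Order: $\mu\le\lambda$ iff $\lambda-\mu$ is a nonnegative integer combination of simple roots. A triple $(\lambda,\mu,\nu)$ of dominant weights is a low triple if (i) whenever $\lambda',\mu'$ are dominant with $\lambda'\le\lambda$, $\mu'\le\mu$, $\nu\le\lambda'+\mu'$, then $\lambda'=\lambda$, $\mu'=\mu$; and (ii) $\nu+\sum_{i=1}^\ell\alpha_i\le\lambda+\mu$. *)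

theory Defs
  imports Complex_Main "HOL-Library.Function_Algebras"
begin

text \<open>Concrete realisation of the root system BC_l in R^l. Vectors of R^l are
  functions nat => real supported on {1..l}; coordinates are e_1,...,e_l.\<close>

definition vspace :: "nat \<Rightarrow> (nat \<Rightarrow> real) set" where
  "vspace l = {x. \<forall>j. j \<notin> {1..l} \<longrightarrow> x j = 0}"

definition unitv :: "nat \<Rightarrow> nat \<Rightarrow> real" where
  "unitv i = (\<lambda>j. if j = i then 1 else 0)"

definition ip :: "nat \<Rightarrow> (nat \<Rightarrow> real) \<Rightarrow> (nat \<Rightarrow> real) \<Rightarrow> real" where
  "ip l x y = (\<Sum>j=1..l. x j * y j)"

definition smul :: "real \<Rightarrow> (nat \<Rightarrow> real) \<Rightarrow> (nat \<Rightarrow> real)" where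
  "smul c x = (\<lambda>j. c * x j)"

definition rootsB :: "nat \<Rightarrow> (nat \<Rightarrow> real) set" where
  "rootsB l = {smul s (unitv i) | s i. s \<in> {1, -1} \<and> i \<in> {1..l}}
     \<union> {smul s (unitv i) + smul t (unitv j) | s t i j.
          s \<in> {1, -1} \<and> t \<in> {1, -1} \<and> i \<in> {1..l} \<and> j \<in> {1..l} \<and> i \<noteq> j}"

definition rootsC :: "nat \<Rightarrow> (nat \<Rightarrow> real) set" where
  "rootsC l = {smul s (unitv i) + smul t (unitv j) | s t i j.
          s \<in> {1, -1} \<and> t \<in> {1, -1} \<and> i \<in> {1..l} \<and> j \<in> {1..l} \<and> i \<noteq> j}
     \<union> {smul s (unitv i) | s i. s \<in> {2, -2} \<and> i \<in> {1..l}}"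

definition rootsBC :: "nat \<Rightarrow> (nat \<Rightarrow> real) set" where
  "rootsBC l = rootsB l \<union> rootsC l"

definition coroot :: "nat \<Rightarrow> (nat \<Rightarrow> real) \<Rightarrow> (nat \<Rightarrow> real)" where
  "coroot l a = smul (2 / ip l a a) a"

text \<open>Basis of B_l in Bourbaki numbering: alpha_i = e_i - e_(i+1) (i < l), alpha_l = e_l.\<close>
definition simple_root :: "nat \<Rightarrow> nat \<Rightarrow> (nat \<Rightarrow> real)" where
  "simple_root l i = (if i < l then unitv i - unitv (Suc i) else unitv l)"

text \<open>Roots whose coroots the fundamental weights are dual to:
  alpha_1,...,alpha_(l-1), 2 alpha_l (the basis of C_l).\<close>
definition cbasis_root :: "nat \<Rightarrow> nat \<Rightarrow> (nat \<Rightarrow> real)" where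
  "cbasis_root l i = (if i < l then simple_root l i else smul 2 (simple_root l l))"

definition integral_weight :: "nat \<Rightarrow> (nat \<Rightarrow> real) \<Rightarrow> bool" where
  "integral_weight l x \<longleftrightarrow> x \<in> vspace l \<and> (\<forall>a \<in> rootsBC l. ip l x (coroot l a) \<in> \<int>)"

definition fund_weight :: "nat \<Rightarrow> nat \<Rightarrow> (nat \<Rightarrow> real)" where
  "fund_weight l i = (THE w. w \<in> vspace l \<and>
      (\<forall>j \<in> {1..l}. ip l w (coroot l (cbasis_root l j)) = (if i = j then 1 else 0)))"

definition dominant :: "nat \<Rightarrow> (nat \<Rightarrow> real) \<Rightarrow> bool" where
  "dominant l x \<longleftrightarrow> (\<exists>c :: nat \<Rightarrow> nat.
      x = (\<lambda>j. \<Sum>i=1..l. real (c i) * fund_weight l i j))"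

definition wle :: "nat \<Rightarrow> (nat \<Rightarrow> real) \<Rightarrow> (nat \<Rightarrow> real) \<Rightarrow> bool" where
  "wle l m x \<longleftrightarrow> (\<exists>c :: nat \<Rightarrow> nat.
      x - m = (\<lambda>j. \<Sum>i=1..l. real (c i) * simple_root l i j))"

definition low_triple :: "nat \<Rightarrow> (nat \<Rightarrow> real) \<Rightarrow> (nat \<Rightarrow> real) \<Rightarrow> (nat \<Rightarrow> real) \<Rightarrow> bool" where
  "low_triple l lam mu nu \<longleftrightarrow>
     dominant l lam \<and> dominant l mu \<and> dominant l nu \<and>
     (\<forall>lam' mu'. dominant l lam' \<longrightarrow> dominant l mu' \<longrightarrow> wle l lam' lam \<longrightarrow> wle l mu' mu \<longrightarrow>
         wle l nu (lam' + mu') \<longrightarrow> lam' = lam \<and> mu' = mu) \<and>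
     wle l (nu + (\<lambda>j. \<Sum>i=1..l. simple_root l i j)) (lam + mu)"

end

theory Submission imports Defs begin

definition W :: "nat \<Rightarrow> nat \<Rightarrow> real" where
  "W i = (\<lambda>j. if 1 \<le> j \<and> j \<le> i then 1 else 0)"

definition comb :: "nat \<Rightarrow> (nat \<Rightarrow> nat) \<Rightarrow> nat \<Rightarrow> real" where
  "comb l c = (\<lambda>j. \<Sum>i=1..l. real (c i) * simple_root l i j)"

lemma ip_unitv: "k \<in> {1..l} \<Longrightarrow> ip l w (unitv k) = w k"
  unfolding ip_def unitv_def
  by (simp add: if_distrib[of "\<lambda>x. _ * x"] sum.delta' cong: if_cong)

lemma ip_diff: "ip l w (a - b) = ip l w a - ip l w b"
  unfolding ip_def by (simp add: algebra_simps sum_subtractf)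

lemma ip_smul: "ip l w (smul c a) = c * ip l w a"
  unfolding ip_def smul_def by (simp add: sum_distrib_left algebra_simps)

lemma cond_lt:
  assumes "1 \<le> j" "j < l"
  shows "ip l w (coroot l (cbasis_root l j)) = w j - w (Suc j)"
proof -
  have r: "cbasis_root l j = unitv j - unitv (Suc j)"
    using assms by (simp add: cbasis_root_def simple_root_def)
  have "ip l (unitv j - unitv (Suc j)) (unitv j - unitv (Suc j)) = 2"
    using assms by (simp add: ip_diff ip_unitv) (simp add: unitv_def)
  hence "coroot l (cbasis_root l j) = unitv j - unitv (Suc j)"
    unfolding coroot_def r smul_def by (simp add: fun_diff_def)
  thus ?thesis using assms by (simp add: ip_diff ip_unitv)
qed

lemma cond_eq:
  assumes "1 \<le> l"
  shows "ip l w (coroot l (cbasis_root l l)) = w l"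
proof -
  have r: "cbasis_root l l = smul 2 (unitv l)"
    using assms by (simp add: cbasis_root_def simple_root_def)
  have "ip l (smul 2 (unitv l)) (smul 2 (unitv l)) = 4"
    using assms by (simp add: ip_smul ip_unitv) (simp add: unitv_def smul_def)
  hence "coroot l (cbasis_root l l) = unitv l"
    unfolding coroot_def r smul_def by auto
  thus ?thesis using assms by (simp add: ip_unitv)
qed

lemma fw: assumes "i \<in> {1..l}" shows "fund_weight l i = W i"
  unfolding fund_weight_def
proof (rule the_equality)
  show "W i \<in> vspace l \<and> (\<forall>j\<in>{1..l}. ip l (W i) (coroot l (cbasis_root l j)) = (if i = j then 1 else 0))"
  proof
    show "W i \<in> vspace l" using assms by (auto simp: vspace_def W_def)
    show "\<forall>j\<in>{1..l}. ip l (W i) (coroot l (cbasis_root l j)) = (if i = j then 1 else 0)"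
    proof
      fix j assume j: "j \<in> {1..l}"
      show "ip l (W i) (coroot l (cbasis_root l j)) = (if i = j then 1 else 0)"
      proof (cases "j < l")
        case True thus ?thesis using j assms by (simp add: cond_lt W_def)
      next
        case False hence "j = l" using j by auto
        thus ?thesis using j assms by (simp add: cond_eq W_def)
      qed
    qed
  qed
next
  fix w assume h: "w \<in> vspace l \<and> (\<forall>j\<in>{1..l}. ip l w (coroot l (cbasis_root l j)) = (if i = j then 1 else 0))"
  have l1: "1 \<le> l" using assms by auto
  have lt: "w j = w (Suc j) + (if i = j then 1 else 0)" if "1 \<le> j" "j < l" for j
    using h that cond_lt[OF that, of w] by auto
  have eq: "w l = (if i = l then 1 else 0)"
    using h l1 cond_eq[OF l1, of w] by auto
  have ind: "n < l \<Longrightarrow> w (l - n) = W i (l - n)" for n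
  proof (induction n)
    case 0 thus ?case using eq assms by (auto simp: W_def)
  next
    case (Suc n)
    have "w (l - Suc n) = w (Suc (l - Suc n)) + (if i = l - Suc n then 1 else 0)"
      using lt[of "l - Suc n"] Suc.prems by auto
    also have "Suc (l - Suc n) = l - n" using Suc.prems by auto
    finally show ?case using Suc by (auto simp: W_def)
  qed
  show "w = W i"
  proof
    fix j show "w j = W i j"
    proof (cases "j \<in> {1..l}")
      case True thus ?thesis using ind[of "l - j"] by auto
    next
      case False thus ?thesis using h assms by (auto simp: vspace_def W_def)
    qed
  qed
qed

lemma comb_coord:
  "comb l c j = (if 1 \<le> j \<and> j \<le> l then real (c j) - (if j = 1 then 0 else real (c (j - 1))) else 0)"
proof -
  have sr: "simple_root l i j = (if i = j then 1 else 0) - (if i = j - 1 \<and> 2 \<le> j \<and> j \<le> l then 1 else 0)"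
    if "i \<in> {1..l}" for i
    using that by (auto simp: simple_root_def unitv_def)
  have "comb l c j = (\<Sum>i=1..l. (if i = j then real (c i) else 0) - (if i = j - 1 then (if 2 \<le> j \<and> j \<le> l then real (c i) else 0) else 0))"
    unfolding comb_def by (rule sum.cong) (auto simp: sr)
  also have "\<dots> = (if 1 \<le> j \<and> j \<le> l then real (c j) - (if j = 1 then 0 else real (c (j - 1))) else 0)"
    by (simp add: sum_subtractf sum.delta') arith
  finally show ?thesis .
qed

lemma comb_add: "comb l c + comb l d = comb l (\<lambda>i. c i + d i)"
  unfolding comb_def by (auto simp: sum.distrib[symmetric] algebra_simps)

lemma comb_zero: "comb l (\<lambda>_. 0) = 0"
  unfolding comb_def by auto

lemma wle_iff: "wle l m x \<longleftrightarrow> (\<exists>c. x - m = comb l c)"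
  unfolding wle_def comb_def by simp

lemma S_eq: "(\<lambda>j. \<Sum>i=1..l. simple_root l i j) = comb l (\<lambda>_. 1)"
  unfolding comb_def by simp

lemma unitv_comb: assumes "k \<in> {1..l}" shows "unitv k = comb l (\<lambda>i. if k \<le> i then 1 else 0)"
  using assms by (auto simp: comb_coord unitv_def fun_eq_iff)

lemma S_minus_unitv: assumes "k \<in> {1..l}"
  shows "comb l (\<lambda>_. 1) - unitv k = comb l (\<lambda>i. if i < k then 1 else 0)"
  using assms by (auto simp: comb_coord unitv_def fun_eq_iff)

definition F :: "nat \<Rightarrow> (nat \<Rightarrow> nat) \<Rightarrow> nat \<Rightarrow> real" where
  "F l c = (\<lambda>j. \<Sum>i=1..l. real (c i) * fund_weight l i j)"

lemma dominant_F: "dominant l x \<longleftrightarrow> (\<exists>c. x = F l c)"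
  unfolding dominant_def F_def by simp

lemma key:
  assumes k: "k \<in> {1..l}" and ck: "c k > 0"
  shows "F l c - F l (c(k := c k - 1, k - 1 := c (k - 1) + 1)) = unitv k"
proof
  fix j
  define c' where "c' = c(k := c k - 1, k - 1 := c (k - 1) + 1)"
  have d: "real (c i) - real (c' i) = (if i = k then 1 else 0) - (if i = k - 1 then 1 else 0)" for i
    using k ck unfolding c'_def by (auto simp: of_nat_diff)
  have "(F l c - F l c') j = (\<Sum>i=1..l. (real (c i) - real (c' i)) * W i j)"
    unfolding F_def by (auto simp: sum_subtractf[symmetric] algebra_simps fw intro!: sum.cong)
  also have "\<dots> = (\<Sum>i=1..l. (if i = k then W i j else 0) - (if i = k - 1 then W i j else 0))"
    by (rule sum.cong) (auto simp: d)
  also have "\<dots> = unitv k j"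
    using k by (auto simp: sum_subtractf sum.delta' W_def unitv_def)
  finally show "(F l c - F l (c(k := c k - 1, k - 1 := c (k - 1) + 1))) j = unitv k j"
    unfolding c'_def .
qed

lemma F_zero: "(\<forall>i\<in>{1..l}. c i = 0) \<Longrightarrow> F l c = 0"
  unfolding F_def by (auto intro!: sum.neutral)

lemma F_1_nonneg: "F l c 1 \<ge> 0"
proof -
  have "fund_weight l i 1 \<ge> 0" if "i \<in> {1..l}" for i using that by (simp add: fw W_def)
  thus ?thesis unfolding F_def by (auto intro!: sum_nonneg)
qed

theorem mainTheorem5:
  fixes l :: nat
  assumes "l \<ge> 1"
  shows "\<not> (\<exists>lam mu nu. low_triple l lam mu nu)"
proof
  assume "\<exists>lam mu nu. low_triple l lam mu nu"
  then obtain lam mu nu where lt: "low_triple l lam mu nu" by blast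
  define S where "S = comb l (\<lambda>_. 1)"
  from lt obtain cl cm cn where lam: "lam = F l cl" and mu: "mu = F l cm" and nu: "nu = F l cn"
    unfolding low_triple_def dominant_F by blast
  have min: "\<And>lam' mu'. dominant l lam' \<Longrightarrow> dominant l mu' \<Longrightarrow> wle l lam' lam \<Longrightarrow> wle l mu' mu \<Longrightarrow>
         wle l nu (lam' + mu') \<Longrightarrow> lam' = lam \<and> mu' = mu"
    using lt unfolding low_triple_def by blast
  from lt obtain d where d: "(lam + mu) - (nu + S) = comb l d"
    unfolding low_triple_def wle_iff S_def S_eq by blast
  have uz: "unitv k \<noteq> 0" for k
  proof
    assume "unitv k = 0" hence "unitv k k = 0" by simp
    thus False by (simp add: unitv_def)
  qed
  show False
  proof (cases "\<exists>k\<in>{1..l}. cl k > 0")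
    case True
    then obtain k where k: "k \<in> {1..l}" "cl k > 0" by blast
    define lam' where "lam' = F l (cl(k := cl k - 1, k - 1 := cl (k - 1) + 1))"
    have e: "lam - lam' = unitv k" unfolding lam lam'_def using key[of k l cl, OF k] .
    have 1: "wle l lam' lam" unfolding wle_iff e using unitv_comb[OF k(1)] by blast
    have 2: "wle l mu mu" unfolding wle_iff using comb_zero by auto
    have "(lam' + mu) - nu = ((lam + mu) - (nu + S)) + (S - unitv k)"
      using e by (auto simp: fun_eq_iff algebra_simps)
    also have "\<dots> = comb l d + comb l (\<lambda>i. if i < k then 1 else 0)"
      using d S_minus_unitv[OF k(1)] S_def by simp
    finally have 3: "wle l nu (lam' + mu)" unfolding wle_iff comb_add by blast
    have "lam' = lam" using min[OF _ _ 1 2 3] lam'_def mu by (auto simp: dominant_F)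
    thus False using e uz by simp
  next
    case F1: False
    show False
    proof (cases "\<exists>k\<in>{1..l}. cm k > 0")
      case True
      then obtain k where k: "k \<in> {1..l}" "cm k > 0" by blast
      define mu' where "mu' = F l (cm(k := cm k - 1, k - 1 := cm (k - 1) + 1))"
      have e: "mu - mu' = unitv k" unfolding mu mu'_def using key[of k l cm, OF k] .
      have 1: "wle l mu' mu" unfolding wle_iff e using unitv_comb[OF k(1)] by blast
      have 2: "wle l lam lam" unfolding wle_iff using comb_zero by auto
      have "(lam + mu') - nu = ((lam + mu) - (nu + S)) + (S - unitv k)"
        using e by (auto simp: fun_eq_iff algebra_simps)
      also have "\<dots> = comb l d + comb l (\<lambda>i. if i < k then 1 else 0)"
        using d S_minus_unitv[OF k(1)] S_def by simp
      finally have 3: "wle l nu (lam + mu')" unfolding wle_iff comb_add by blast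
      have "mu' = mu" using min[OF _ _ 2 1 3] mu'_def lam by (auto simp: dominant_F)
      thus False using e uz by simp
    next
      case False
      have "lam = 0" "mu = 0" using F1 False F_zero lam mu by auto
      have "comb l d 1 = (lam + mu - (nu + S)) 1" using d by simp
      also have "\<dots> = - nu 1 - S 1" using \<open>lam = 0\<close> \<open>mu = 0\<close> by simp
      also have "S 1 = 1" using assms by (simp add: S_def comb_coord)
      finally have "comb l d 1 = - nu 1 - 1" .
      moreover have "comb l d 1 \<ge> 0" using assms by (simp add: comb_coord)
      moreover have "nu 1 \<ge> 0" using nu F_1_nonneg by simp
      ultimately show False by linarith
    qed
  qed
qed

end
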